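(* The linear span of $\{(I-S)h_k:k\geq2\}$ is dense in $H^2$.
   Context: $H^2$ is the Hardy space on the open unit disk $\mathbb{D}$ and $S$ the shift operator $Sf(z)=zf(z)$. For $k\geq 2$, $h_k(z)=\frac{1}{1-z}\big(\mathrm{Log}(1-z^k)-\mathrm{Log}(1-z)-\ln k\big)$ with $\mathrm{Log}$ the principal branch, so $(I-S)h_k(z)=\mathrm{Log}(1-z^k)-\mathrm{Log}(1-z)-\ln k$. *)

theory Defs
  imports "HOL-Analysis.Analysis"
begin

definition taylor_coeff :: "(complex \<Rightarrow> complex) \<Rightarrow> nat \<Rightarrow> complex" where
  "taylor_coeff f n = (deriv ^^ n) f 0 / of_nat (fact n)"

definition hardy2 :: "(complex \<Rightarrow> complex) set" where
  "hardy2 = {f. f holomorphic_on ball 0 1 \<and>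
                summable (\<lambda>n. (cmod (taylor_coeff f n))^2)}"

definition hardy2_norm :: "(complex \<Rightarrow> complex) \<Rightarrow> real" where
  "hardy2_norm f = sqrt (\<Sum>n. (cmod (taylor_coeff f n))^2)"

definition shift :: "(complex \<Rightarrow> complex) \<Rightarrow> complex \<Rightarrow> complex" where
  "shift f = (\<lambda>z. z * f z)"

definition h :: "nat \<Rightarrow> complex \<Rightarrow> complex" where
  "h k = (\<lambda>z. (Ln (1 - z ^ k) - Ln (1 - z) - of_real (ln (real k))) / (1 - z))"

definition lin_span :: "(complex \<Rightarrow> complex) set \<Rightarrow> (complex \<Rightarrow> complex) set" where
  "lin_span F = {g. \<exists>A c. finite A \<and> A \<subseteq> F \<and> g = (\<lambda>z. \<Sum>u\<in>A. c u * u z)}"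

end

theory Submission
  imports Defs "HOL-Complex_Analysis.Complex_Analysis"
begin


definition l2 :: "(nat \<Rightarrow> complex) \<Rightarrow> bool" where
  "l2 a \<longleftrightarrow> summable (\<lambda>n. (cmod (a n))^2)"
definition nrm :: "(nat \<Rightarrow> complex) \<Rightarrow> real" where
  "nrm a = sqrt (\<Sum>n. (cmod (a n))^2)"

lemma nrm_nonneg: "l2 a \<Longrightarrow> nrm a \<ge> 0"
  unfolding l2_def nrm_def by (simp add: suminf_nonneg)

lemma L2_le_nrm: assumes "l2 a" shows "L2_set (\<lambda>n. cmod (a n)) {..<N} \<le> nrm a"
proof -
  have "(\<Sum>n<N. (cmod (a n))^2) \<le> (\<Sum>n. (cmod (a n))^2)"
    using assms unfolding l2_def by (intro sum_le_suminf) auto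
  thus ?thesis unfolding L2_set_def nrm_def by simp
qed

lemma nrm_add:
  assumes "l2 a" "l2 b"
  shows "l2 (\<lambda>n. a n + b n) \<and> nrm (\<lambda>n. a n + b n) \<le> nrm a + nrm b"
proof -
  have B: "(\<Sum>n<N. (cmod (a n + b n))^2) \<le> (nrm a + nrm b)^2" for N
  proof -
    have "L2_set (\<lambda>n. cmod (a n + b n)) {..<N} \<le> L2_set (\<lambda>n. cmod (a n) + cmod (b n)) {..<N}"
      by (intro L2_set_mono) (auto simp: norm_triangle_ineq)
    also have "\<dots> \<le> L2_set (\<lambda>n. cmod (a n)) {..<N} + L2_set (\<lambda>n. cmod (b n)) {..<N}"
      by (rule L2_set_triangle_ineq)
    also have "\<dots> \<le> nrm a + nrm b" using L2_le_nrm[OF assms(1), of N] L2_le_nrm[OF assms(2), of N] by (rule add_mono)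
    finally have "sqrt (\<Sum>n<N. (cmod (a n + b n))^2) \<le> nrm a + nrm b" unfolding L2_set_def .
    moreover have "0 \<le> (\<Sum>n<N. (cmod (a n + b n))^2)" by (intro sum_nonneg) auto
    ultimately have "(sqrt (\<Sum>n<N. (cmod (a n + b n))^2))^2 \<le> (nrm a + nrm b)^2"
      by (intro power_mono) auto
    moreover note \<open>0 \<le> (\<Sum>n<N. (cmod (a n + b n))^2)\<close>
    ultimately show ?thesis by simp
  qed
  have S: "summable (\<lambda>n. (cmod (a n + b n))^2)"
    by (rule summableI_nonneg_bounded[OF _ B]) auto
  have "(\<Sum>n. (cmod (a n + b n))^2) \<le> (nrm a + nrm b)^2"
    by (rule suminf_le_const[OF S B])
  hence "nrm (\<lambda>n. a n + b n) \<le> sqrt ((nrm a + nrm b)^2)" unfolding nrm_def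
    by (rule real_sqrt_le_mono)
  also have "\<dots> = nrm a + nrm b" using nrm_nonneg[OF assms(1)] nrm_nonneg[OF assms(2)] by simp
  finally show ?thesis using S unfolding l2_def by simp
qed

lemma nrm_scale:
  assumes "l2 a"
  shows "l2 (\<lambda>n. c * a n) \<and> nrm (\<lambda>n. c * a n) = cmod c * nrm a"
proof -
  have e: "(\<lambda>n. (cmod (c * a n))^2) = (\<lambda>n. (cmod c)^2 * (cmod (a n))^2)"
    by (simp add: norm_mult power_mult_distrib)
  have S: "summable (\<lambda>n. (cmod (c * a n))^2)" unfolding e
    using assms unfolding l2_def by (rule summable_mult)
  have "(\<Sum>n. (cmod (c * a n))^2) = (cmod c)^2 * (\<Sum>n. (cmod (a n))^2)" unfolding e
    using assms unfolding l2_def by (rule suminf_mult)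
  thus ?thesis using S unfolding l2_def nrm_def by (simp add: real_sqrt_mult)
qed

lemma nrm_mono:
  assumes "l2 b" "\<And>n. cmod (a n) \<le> cmod (b n)"
  shows "l2 a \<and> nrm a \<le> nrm b"
proof -
  have le: "(cmod (a n))^2 \<le> (cmod (b n))^2" for n using assms(2)[of n] by (simp add: power_mono)
  have S: "summable (\<lambda>n. (cmod (a n))^2)"
    using assms(1) unfolding l2_def by (rule summable_comparison_test') (use le in auto)
  have "(\<Sum>n. (cmod (a n))^2) \<le> (\<Sum>n. (cmod (b n))^2)"
    using S assms(1) le unfolding l2_def by (intro suminf_le) auto
  thus ?thesis using S unfolding l2_def nrm_def by simp
qed

lemma nrm_diff:
  assumes "l2 a" "l2 b"
  shows "l2 (\<lambda>n. a n - b n) \<and> nrm (\<lambda>n. a n - b n) \<le> nrm a + nrm b"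
proof -
  have "l2 (\<lambda>n. (-1) * b n) \<and> nrm (\<lambda>n. (-1) * b n) = nrm b"
    using nrm_scale[OF assms(2), of "-1"] by simp
  thus ?thesis using nrm_add[OF assms(1), of "\<lambda>n. (-1) * b n"] by simp
qed

lemma nrm_zero: "l2 (\<lambda>n. 0) \<and> nrm (\<lambda>n. 0) = 0"
  unfolding l2_def nrm_def by simp

lemma l2_finite:
  assumes "finite N" "\<And>n. n \<notin> N \<Longrightarrow> a n = 0"
  shows "l2 a \<and> nrm a = sqrt (\<Sum>n\<in>N. (cmod (a n))^2)"
  unfolding l2_def nrm_def using assms
  by (auto intro!: summable_finite suminf_finite)



definition phi :: "nat \<Rightarrow> complex" where
  "phi n = (if n = 0 then 0 else 1 / of_nat n)"
definition psi :: "nat \<Rightarrow> nat \<Rightarrow> complex" where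
  "psi k n = (if n \<noteq> 0 \<and> k dvd n then of_nat k / of_nat n else 0)"
definition delta :: "nat \<Rightarrow> nat \<Rightarrow> complex" where
  "delta m n = (if n = m then 1 else 0)"
definition G :: "nat \<Rightarrow> nat \<Rightarrow> complex" where
  "G k n = phi n - psi k n - (if n = 0 then of_real (ln (real k)) else 0)"

lemma l2_phi: "l2 phi"
proof -
  have "(\<lambda>n. (cmod (phi n))^2) = (\<lambda>n. inverse (of_nat n ^ 2 :: real))"
    by (rule ext) (auto simp: phi_def norm_divide power_divide field_simps)
  thus ?thesis unfolding l2_def using inverse_power_summable[of 2, where 'a=real] by simp
qed

lemma psi_sums:
  assumes "k \<ge> 1"
  shows "(\<lambda>n. (cmod (psi k n))^2) sums (\<Sum>n. (cmod (phi n))^2)"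
proof -
  have sm: "strict_mono (\<lambda>m. k * m)" using assms by (auto simp: strict_mono_def)
  have e: "(\<lambda>m. (cmod (psi k (k * m)))^2) = (\<lambda>m. (cmod (phi m))^2)"
    using assms by (auto simp: psi_def phi_def norm_divide)
  have "(\<lambda>m. (cmod (phi m))^2) sums (\<Sum>n. (cmod (phi n))^2)"
    using l2_phi unfolding l2_def by (rule summable_sums)
  hence "(\<lambda>m. (cmod (psi k (k * m)))^2) sums (\<Sum>n. (cmod (phi n))^2)" unfolding e .
  thus ?thesis
    by (subst (asm) sums_mono_reindex[OF sm]) (auto simp: psi_def)
qed

lemma l2_psi: "k \<ge> 1 \<Longrightarrow> l2 (psi k) \<and> nrm (psi k) = nrm phi"
  using psi_sums[of k] unfolding l2_def nrm_def by (auto simp: sums_iff)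

lemma l2_delta: "l2 (delta m) \<and> nrm (delta m) = 1"
  using l2_finite[of "{m}" "delta m"] by (auto simp: delta_def)

lemma l2_G: assumes "k \<ge> 1" shows "l2 (G k)"
proof -
  have "l2 (\<lambda>n. phi n - psi k n)" using nrm_diff[OF l2_phi, of "psi k"] l2_psi[OF assms] by simp
  moreover have "l2 (\<lambda>n. of_real (ln (real k)) * delta 0 n)" using nrm_scale[OF l2_delta[THEN conjunct1]] by blast
  ultimately have "l2 (\<lambda>n. (phi n - psi k n) - of_real (ln (real k)) * delta 0 n)"
    using nrm_diff by blast
  moreover have "(\<lambda>n. (phi n - psi k n) - of_real (ln (real k)) * delta 0 n) = G k"
    by (auto simp: G_def delta_def)
  ultimately show ?thesis by simp
qed

definition V :: "(nat \<Rightarrow> complex) set" where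
  "V = {v. \<exists>K c. finite K \<and> K \<subseteq> {2..} \<and> v = (\<lambda>n. \<Sum>k\<in>K. c k * G k n)}"

definition Cl :: "(nat \<Rightarrow> complex) \<Rightarrow> bool" where
  "Cl a \<longleftrightarrow> l2 a \<and> (\<forall>e>0. \<exists>v\<in>V. l2 v \<and> nrm (\<lambda>n. a n - v n) < e)"

lemma V_lin:
  assumes "v \<in> V" "w \<in> V"
  shows "(\<lambda>n. \<alpha> * v n + \<beta> * w n) \<in> V"
proof -
  obtain K c where K: "finite K" "K \<subseteq> {2..}" "v = (\<lambda>n. \<Sum>k\<in>K. c k * G k n)"
    using assms(1) unfolding V_def by blast
  obtain L d where L: "finite L" "L \<subseteq> {2..}" "w = (\<lambda>n. \<Sum>k\<in>L. d k * G k n)"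
    using assms(2) unfolding V_def by blast
  define e where "e k = \<alpha> * (if k \<in> K then c k else 0) + \<beta> * (if k \<in> L then d k else 0)" for k
  have 1: "(\<Sum>k\<in>K. c k * G k n) = (\<Sum>k\<in>K \<union> L. (if k \<in> K then c k else 0) * G k n)" for n
    using K(1) L(1) by (intro sum.mono_neutral_cong_left) auto
  have 2: "(\<Sum>k\<in>L. d k * G k n) = (\<Sum>k\<in>K \<union> L. (if k \<in> L then d k else 0) * G k n)" for n
    using K(1) L(1) by (intro sum.mono_neutral_cong_left) auto
  have "(\<lambda>n. \<alpha> * v n + \<beta> * w n) = (\<lambda>n. \<Sum>k\<in>K \<union> L. e k * G k n)"
    unfolding K(3) L(3) 1 2 e_def
    by (auto simp: sum_distrib_left sum.distrib[symmetric] algebra_simps)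
  thus ?thesis unfolding V_def using K L by blast
qed

lemma l2_lin: "l2 a \<Longrightarrow> l2 b \<Longrightarrow> l2 (\<lambda>n. \<alpha> * a n + \<beta> * b n)"
  using nrm_add nrm_scale by blast

lemma Cl_lin:
  assumes "Cl a" "Cl b"
  shows "Cl (\<lambda>n. \<alpha> * a n + \<beta> * b n)"
  unfolding Cl_def
proof (intro conjI allI impI)
  show "l2 (\<lambda>n. \<alpha> * a n + \<beta> * b n)" using assms unfolding Cl_def using l2_lin by blast
  fix e :: real assume e: "e > 0"
  define e' where "e' = e / (2 * (cmod \<alpha> + cmod \<beta> + 1))"
  have e': "e' > 0" unfolding e'_def using e by (simp add: add_nonneg_pos)
  obtain v where v: "v \<in> V" "l2 v" "nrm (\<lambda>n. a n - v n) < e'" using assms(1) e' unfolding Cl_def by blast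
  obtain w where w: "w \<in> V" "l2 w" "nrm (\<lambda>n. b n - w n) < e'" using assms(2) e' unfolding Cl_def by blast
  have la: "l2 a" and lb: "l2 b" using assms unfolding Cl_def by auto
  have lav: "l2 (\<lambda>n. a n - v n)" using nrm_diff[OF la v(2)] by blast
  have lbw: "l2 (\<lambda>n. b n - w n)" using nrm_diff[OF lb w(2)] by blast
  have eq: "(\<lambda>n. (\<alpha> * a n + \<beta> * b n) - (\<alpha> * v n + \<beta> * w n)) =
       (\<lambda>n. \<alpha> * (a n - v n) + \<beta> * (b n - w n))" by (auto simp: algebra_simps)
  have "nrm (\<lambda>n. \<alpha> * (a n - v n) + \<beta> * (b n - w n)) \<le>
        nrm (\<lambda>n. \<alpha> * (a n - v n)) + nrm (\<lambda>n. \<beta> * (b n - w n))"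
    using nrm_add nrm_scale[OF lav] nrm_scale[OF lbw] by blast
  also have "\<dots> = cmod \<alpha> * nrm (\<lambda>n. a n - v n) + cmod \<beta> * nrm (\<lambda>n. b n - w n)"
    using nrm_scale[OF lav] nrm_scale[OF lbw] by simp
  also have "\<dots> \<le> cmod \<alpha> * e' + cmod \<beta> * e'"
    using v(3) w(3) by (intro add_mono mult_left_mono) auto
  also have "\<dots> < e"
  proof -
    define s where "s = cmod \<alpha> + cmod \<beta>"
    have s0: "s \<ge> 0" unfolding s_def by simp
    have "cmod \<alpha> * e' + cmod \<beta> * e' = s * e'" unfolding s_def by (simp add: algebra_simps)
    also have "\<dots> = e * (s / (2 * (s + 1)))" unfolding e'_def s_def by simp
    finally have "cmod \<alpha> * e' + cmod \<beta> * e' = e * (s / (2 * (s + 1)))" .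
    also have "s / (2 * (s + 1)) < 1" using s0 by (simp add: field_simps)
    hence "e * (s / (2 * (s + 1))) < e * 1" using e by (intro mult_strict_left_mono) auto
    finally show ?thesis by simp
  qed
  finally have f1: "nrm (\<lambda>n. (\<alpha> * a n + \<beta> * b n) - (\<alpha> * v n + \<beta> * w n)) < e" unfolding eq .
  have f2: "(\<lambda>n. \<alpha> * v n + \<beta> * w n) \<in> V" using V_lin[OF v(1) w(1)] .
  have f3: "l2 (\<lambda>n. \<alpha> * v n + \<beta> * w n)" using l2_lin[OF v(2) w(2)] .
  show "\<exists>v\<in>V. l2 v \<and> nrm (\<lambda>n. \<alpha> * a n + \<beta> * b n - v n) < e"
  proof (rule bexI[where x="\<lambda>n. \<alpha> * v n + \<beta> * w n"])
    show "l2 (\<lambda>n. \<alpha> * v n + \<beta> * w n) \<and> nrm (\<lambda>n. \<alpha> * a n + \<beta> * b n - (\<alpha> * v n + \<beta> * w n)) < e"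
      using f1 f3 by simp
  qed (rule f2)
qed

lemma Cl_lim:
  assumes "l2 a" "\<And>e. e > 0 \<Longrightarrow> \<exists>b. Cl b \<and> nrm (\<lambda>n. a n - b n) < e"
  shows "Cl a"
  unfolding Cl_def
proof (intro conjI allI impI)
  fix e :: real assume e: "e > 0"
  obtain b where b: "Cl b" "nrm (\<lambda>n. a n - b n) < e/2" using assms(2)[of "e/2"] e by auto
  obtain v where v: "v \<in> V" "l2 v" "nrm (\<lambda>n. b n - v n) < e/2" using b(1) e unfolding Cl_def
    by (meson half_gt_zero)
  have lb: "l2 b" using b(1) unfolding Cl_def by auto
  have "nrm (\<lambda>n. (a n - b n) + (b n - v n)) \<le> nrm (\<lambda>n. a n - b n) + nrm (\<lambda>n. b n - v n)"
    using nrm_add nrm_diff[OF assms(1) lb] nrm_diff[OF lb v(2)] by blast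
  hence "nrm (\<lambda>n. a n - v n) < e" using b(2) v(3) by simp
  thus "\<exists>v\<in>V. l2 v \<and> nrm (\<lambda>n. a n - v n) < e" using v(1,2) by (intro bexI[where x=v]) auto
qed (use assms in auto)

lemma Cl_V: "v \<in> V \<Longrightarrow> l2 v \<Longrightarrow> Cl v"
  unfolding Cl_def
proof (intro conjI allI impI)
  fix e :: real assume "v \<in> V" "l2 v" "e > 0"
  thus "\<exists>w\<in>V. l2 w \<and> nrm (\<lambda>n. v n - w n) < e"
    using nrm_zero by (intro bexI[where x=v]) auto
qed

lemma V_zero: "(\<lambda>n. 0) \<in> V"
  unfolding V_def by (rule CollectI, rule exI[of _ "{}"]) auto

lemma Cl_zero: "Cl (\<lambda>n. 0)" using Cl_V[OF V_zero] nrm_zero by blast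

lemma Cl_sum:
  assumes "finite I" "\<And>i. i \<in> I \<Longrightarrow> Cl (f i)"
  shows "Cl (\<lambda>n. \<Sum>i\<in>I. c i * f i n)"
  using assms
proof (induction I rule: finite_induct)
  case empty thus ?case using Cl_zero by simp
next
  case (insert x F)
  have "Cl (\<lambda>n. c x * f x n + 1 * (\<Sum>i\<in>F. c i * f i n))"
    using insert by (intro Cl_lin) auto
  thus ?case using insert by simp
qed

lemma Cl_G: "k \<ge> 2 \<Longrightarrow> Cl (G k)"
proof -
  assume k: "k \<ge> 2"
  have "G k = (\<lambda>n. \<Sum>j\<in>{k}. 1 * G j n)" by simp
  hence "G k \<in> V" unfolding V_def
    by (intro CollectI exI[of _ "{k}"] exI[of _ "\<lambda>_. 1"]) (use k in auto)
  thus ?thesis using k by (intro Cl_V) (auto intro: l2_G)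
qed



lemma Cl_l2: "Cl a \<Longrightarrow> l2 a" unfolding Cl_def by simp

lemma Cl_scale: "Cl a \<Longrightarrow> Cl (\<lambda>n. c * a n)"
  using Cl_lin[of a a c 0] by simp

lemma Cl_add: "Cl a \<Longrightarrow> Cl b \<Longrightarrow> Cl (\<lambda>n. a n + b n)"
  using Cl_lin[of a b 1 1] by simp

lemma Cl_diff: "Cl a \<Longrightarrow> Cl b \<Longrightarrow> Cl (\<lambda>n. a n - b n)"
  using Cl_lin[of a b 1 "-1"] by simp

lemma Cl_cong: "Cl a \<Longrightarrow> (\<And>n. a n = b n) \<Longrightarrow> Cl b"
proof -
  assume "Cl a" "\<And>n. a n = b n"
  hence "a = b" by auto
  thus ?thesis using \<open>Cl a\<close> by simp
qed

lemma Cl_delta0: "Cl (delta 0)"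
proof (rule Cl_lim)
  show "l2 (delta 0)" using l2_delta by blast
  fix e :: real assume e: "e > 0"
  define X where "X = 2 * nrm phi / e"
  define k where "k = nat \<lceil>exp X\<rceil> + 2"
  have k2: "k \<ge> 2" unfolding k_def by simp
  have "real k > exp X" unfolding k_def by linarith
  hence "ln (exp X) < ln (real k)" using k2 by (intro ln_less_cancel_iff[THEN iffD2]) auto
  hence lnk: "ln (real k) > X" by simp
  have X0: "X \<ge> 0" unfolding X_def using e nrm_nonneg[OF l2_phi] by simp
  have lk: "ln (real k) > 0" using lnk X0 by linarith
  define b where "b = (\<lambda>n. complex_of_real (- 1 / ln (real k)) * G k n)"
  have Clb: "Cl b" unfolding b_def using Cl_G[OF k2] by (rule Cl_scale)
  have eq: "(\<lambda>n. delta 0 n - b n) = (\<lambda>n. complex_of_real (1 / ln (real k)) * (phi n - psi k n))"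
    using lk by (auto simp: b_def G_def delta_def field_simps)
  have lpsi: "l2 (psi k)" "nrm (psi k) = nrm phi" using l2_psi[of k] k2 by auto
  have ld: "l2 (\<lambda>n. phi n - psi k n)" "nrm (\<lambda>n. phi n - psi k n) \<le> 2 * nrm phi"
    using nrm_diff[OF l2_phi lpsi(1)] lpsi(2) by auto
  have cm: "cmod (complex_of_real (1 / ln (real k))) = 1 / ln (real k)" using lk by (simp only: norm_of_real) simp
  have "nrm (\<lambda>n. delta 0 n - b n) = cmod (complex_of_real (1 / ln (real k))) * nrm (\<lambda>n. phi n - psi k n)"
    unfolding eq by (rule nrm_scale[OF ld(1), THEN conjunct2])
  also have "\<dots> = 1 / ln (real k) * nrm (\<lambda>n. phi n - psi k n)" unfolding cm ..
  also have "\<dots> \<le> (1 / ln (real k)) * (2 * nrm phi)" using ld(2) lk by (intro mult_left_mono) auto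
  also have "\<dots> < e"
  proof -
    have "2 * nrm phi = X * e" unfolding X_def using e by simp
    also have "\<dots> < ln (real k) * e" using lnk e by simp
    finally show ?thesis using lk by (simp add: field_simps)
  qed
  finally show "\<exists>b. Cl b \<and> nrm (\<lambda>n. delta 0 n - b n) < e" using Clb by blast
qed

lemma Cl_D: assumes "k \<ge> 1" shows "Cl (\<lambda>n. phi n - psi k n)"
proof (cases "k = 1")
  case True
  have "psi 1 = phi" by (auto simp: psi_def phi_def)
  thus ?thesis using True Cl_zero by simp
next
  case False
  hence k2: "k \<ge> 2" using assms by simp
  have "Cl (\<lambda>n. G k n + complex_of_real (ln (real k)) * delta 0 n)"
    using Cl_G[OF k2] Cl_scale[OF Cl_delta0] by (rule Cl_add)
  thus ?thesis by (rule Cl_cong) (auto simp: G_def delta_def)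
qed

definition tail :: "(nat \<Rightarrow> complex) \<Rightarrow> nat \<Rightarrow> nat \<Rightarrow> complex" where
  "tail a P n = (if n \<ge> P then a n else 0)"

lemma l2_tail: "l2 a \<Longrightarrow> l2 (tail a P)"
  using nrm_mono[of a "tail a P"] by (auto simp: tail_def)

lemma tail_lim:
  assumes "l2 a"
  shows "(\<lambda>P. nrm (tail a P)) \<longlonglongrightarrow> 0"
proof -
  let ?f = "\<lambda>n. (cmod (a n))^2"
  have sf: "summable ?f" using assms unfolding l2_def .
  have eq: "(\<Sum>n. (cmod (tail a P n))^2) = suminf ?f - (\<Sum>n<P. ?f n)" for P
  proof -
    have st: "summable (\<lambda>n. (cmod (tail a P n))^2)" using l2_tail[OF assms] unfolding l2_def .
    have sh: "(\<lambda>n. if n < P then ?f n else 0) sums (\<Sum>n<P. ?f n)"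
      using sums_If_finite_set[of "{..<P}" ?f] by simp
    have "(\<lambda>n. (cmod (tail a P n))^2 + (if n < P then ?f n else 0)) = ?f"
      by (auto simp: tail_def)
    moreover have "(\<lambda>n. (cmod (tail a P n))^2 + (if n < P then ?f n else 0)) sums
        ((\<Sum>n. (cmod (tail a P n))^2) + (\<Sum>n<P. ?f n))"
      using summable_sums[OF st] sh by (rule sums_add)
    ultimately have "?f sums ((\<Sum>n. (cmod (tail a P n))^2) + (\<Sum>n<P. ?f n))" by simp
    hence "suminf ?f = (\<Sum>n. (cmod (tail a P n))^2) + (\<Sum>n<P. ?f n)" by (rule sums_unique[symmetric])
    thus ?thesis by simp
  qed
  have "(\<lambda>P. suminf ?f - (\<Sum>n<P. ?f n)) \<longlonglongrightarrow> suminf ?f - suminf ?f"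
    using summable_LIMSEQ[OF sf] by (intro tendsto_intros)
  hence "(\<lambda>P. sqrt (suminf ?f - (\<Sum>n<P. ?f n))) \<longlonglongrightarrow> sqrt 0"
    by (intro tendsto_real_sqrt) simp
  thus ?thesis unfolding nrm_def eq by simp
qed



definition rough :: "nat \<Rightarrow> nat \<Rightarrow> bool" where
  "rough P j \<longleftrightarrow> (\<forall>d. 2 \<le> d \<and> d \<le> P \<longrightarrow> \<not> d dvd j)"

definition S :: "nat \<Rightarrow> nat \<Rightarrow> nat \<Rightarrow> complex" where
  "S P m n = (if n \<noteq> 0 \<and> m dvd n \<and> rough P (n div m) then of_nat m / of_nat n else 0)"

primrec pp :: "nat \<Rightarrow> real" where
  "pp 0 = 1"
| "pp (Suc P) = (if 2 \<le> Suc P \<and> rough P (Suc P) then pp P * (1 - 1 / real (Suc P)) else pp P)"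

lemma rough_Suc: "rough (Suc P) j \<longleftrightarrow> rough P j \<and> \<not> (2 \<le> Suc P \<and> Suc P dvd j)"
  unfolding rough_def by (auto simp: le_Suc_eq)

lemma rough_1: "rough P 1" "rough P (Suc 0)" unfolding rough_def by auto

lemma rough_big: assumes "rough P j" "j \<ge> 2" shows "j > P"
proof (rule ccontr)
  assume "\<not> j > P"
  hence "j \<le> P" by simp
  thus False using assms unfolding rough_def by auto
qed

lemma rough_mult:
  assumes "rough P Q" "Q = Suc P"
  shows "rough P (Q * i) \<longleftrightarrow> rough P i"
proof
  assume "rough P (Q * i)" thus "rough P i" unfolding rough_def by auto
next
  assume ri: "rough P i"
  show "rough P (Q * i)" unfolding rough_def
  proof (intro allI impI notI)
    fix d assume d: "2 \<le> d \<and> d \<le> P" "d dvd Q * i"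
    have "gcd d Q dvd Q" "gcd d Q \<le> d" using d by (auto intro: dvd_imp_le)
    moreover have "gcd d Q > 0" using d by simp
    moreover have "\<not> (2 \<le> gcd d Q)"
    proof
      assume "2 \<le> gcd d Q"
      moreover have "gcd d Q \<le> P" using \<open>gcd d Q \<le> d\<close> d by linarith
      ultimately show False using assms(1) \<open>gcd d Q dvd Q\<close> unfolding rough_def by blast
    qed
    ultimately have "gcd d Q = 1" by linarith
    hence "coprime d Q" by (simp add: coprime_iff_gcd_eq_1)
    hence "d dvd i" using d(2) coprime_dvd_mult_right_iff by blast
    thus False using ri d unfolding rough_def by blast
  qed
qed

lemma S0: "S 0 m = psi m"
  by (auto simp: S_def psi_def rough_def fun_eq_iff)

lemma S_same:
  assumes "\<not> (2 \<le> Suc P \<and> rough P (Suc P))"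
  shows "S (Suc P) m n = S P m n"
proof -
  have "rough (Suc P) j \<longleftrightarrow> rough P j" for j
  proof (cases "2 \<le> Suc P")
    case True
    then obtain d where d: "2 \<le> d" "d \<le> P" "d dvd Suc P" using assms unfolding rough_def by auto
    show ?thesis unfolding rough_Suc using d unfolding rough_def by (meson dvd_trans)
  qed (simp add: rough_Suc)
  thus ?thesis unfolding S_def by simp
qed

lemma S_step:
  assumes "2 \<le> Suc P" "rough P (Suc P)" "m \<ge> 1"
  shows "S (Suc P) m n = S P m n - (1 / of_nat (Suc P)) * S P (m * Suc P) n"
proof -
  define Q where "Q = Suc P"
  have Q2: "Q \<ge> 2" using assms(1) unfolding Q_def .
  have "S Q m n = S P m n - (1 / of_nat Q) * S P (m * Q) n"
  proof (cases "n \<noteq> 0 \<and> m dvd n")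
    case False
    have "\<not> (m * Q dvd n \<and> n \<noteq> 0)" using False by (auto intro: dvd_mult_left)
    thus ?thesis using False unfolding S_def by auto
  next
    case True
    then obtain j where j: "n = m * j" by (auto elim: dvdE)
    have j0: "j \<noteq> 0" using True j by auto
    have m0: "m > 0" using assms(3) by simp
    have nd: "n div m = j" using j m0 by simp
    show ?thesis
    proof (cases "Q dvd j")
      case False
      have "\<not> m * Q dvd n" using False j m0 by simp
      moreover have "rough Q j \<longleftrightarrow> rough P j" using False rough_Suc[of P j] unfolding Q_def by simp
      ultimately show ?thesis using True unfolding S_def nd by simp
    next
      case qj: True
      then obtain i where i: "j = Q * i" by (auto elim: dvdE)
      have mq: "m * Q dvd n" using i j by simp
      have nd2: "n div (m * Q) = i" using i j m0 Q2 by simp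
      have "rough Q j = False" using qj Q2 unfolding Q_def rough_Suc by simp
      moreover have "rough P j = rough P i" unfolding i using rough_mult[OF _ Q_def] assms(2)
        unfolding Q_def by simp
      have Qc: "(1 / of_nat Q) * (of_nat (m * Q) / of_nat n) = (of_nat m / of_nat n :: complex)"
        using Q2 by (simp add: field_simps)
      have c1: "n \<noteq> 0 \<and> m dvd n" using True by simp
      show ?thesis
      proof (cases "rough P i")
        case True
        thus ?thesis using c1 mq \<open>rough Q j = False\<close> \<open>rough P j = rough P i\<close> Qc
          unfolding S_def nd nd2 by simp
      next
        case False
        thus ?thesis using c1 mq \<open>rough Q j = False\<close> \<open>rough P j = rough P i\<close>
          unfolding S_def nd nd2 by simp
      qed
    qed
  qed
  thus ?thesis unfolding Q_def .
qed

lemma pp_nonneg: "pp P \<ge> 0"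
  by (induction P) auto

lemma pp_dec: "decseq pp"
proof (rule decseq_SucI)
  fix P
  have "pp P * (1 - 1 / real (Suc P)) \<le> pp P * 1" using pp_nonneg[of P]
    by (intro mult_left_mono) auto
  thus "pp (Suc P) \<le> pp P" by auto
qed

definition T :: "nat \<Rightarrow> nat \<Rightarrow> nat \<Rightarrow> complex" where
  "T P m n = S P m n - of_real (pp P) * phi n"

lemma Cl_T: "m \<ge> 1 \<Longrightarrow> Cl (T P m)"
proof (induction P arbitrary: m)
  case 0
  have "Cl (\<lambda>n. (-1) * (phi n - psi m n))" by (rule Cl_scale[OF Cl_D[OF 0]])
  moreover have "(-1) * (phi n - psi m n) = T 0 m n" for n by (simp add: T_def S0)
  ultimately show ?case by (rule Cl_cong)
next
  case (Suc P)
  show ?case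
  proof (cases "2 \<le> Suc P \<and> rough P (Suc P)")
    case False
    have "Cl (T P m)" by (rule Suc.IH[OF Suc.prems])
    moreover have pps: "pp (Suc P) = pp P" by (simp only: pp.simps if_not_P[OF False])
    have "T P m n = T (Suc P) m n" for n unfolding T_def S_same[OF False] pps ..
    ultimately show ?thesis by (rule Cl_cong)
  next
    case True
    have "m * Suc P \<ge> 1" using Suc.prems by simp
    hence "Cl (\<lambda>n. 1 * T P m n + (- (1 / of_nat (Suc P))) * T P (m * Suc P) n)"
      by (intro Cl_lin Suc.IH Suc.prems)
    moreover have pps: "pp (Suc P) = pp P * (1 - 1 / real (Suc P))" by (simp only: pp.simps if_P[OF True])
    have "1 * T P m n + (- (1 / of_nat (Suc P))) * T P (m * Suc P) n = T (Suc P) m n" for n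
      unfolding T_def S_step[OF True[THEN conjunct1] True[THEN conjunct2] Suc.prems] pps
      by (simp add: algebra_simps)
    ultimately show ?thesis by (rule Cl_cong)
  qed
qed

lemma S_delta_bound:
  assumes "m \<ge> 1"
  shows "cmod (delta m n - S P m n) \<le> cmod (of_nat m * tail phi P n)"
proof (cases "n \<noteq> 0 \<and> m dvd n \<and> rough P (n div m)")
  case True
  then obtain j where j: "n = m * j" by (auto elim: dvdE)
  have m0: "m > 0" using assms by simp
  have nd: "n div m = j" using j m0 by simp
  show ?thesis
  proof (cases "j = 1")
    case True thus ?thesis using j m0 by (simp add: S_def delta_def rough_1)
  next
    case False
    have j0: "j \<noteq> 0" using \<open>n \<noteq> 0 \<and> _\<close> j by auto
    hence "j > P" using rough_big[of P j] True False nd by simp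
    moreover have "j \<le> n" using j m0 by simp
    ultimately have "n \<ge> P" by linarith
    moreover have "n \<noteq> m" using j False m0 by simp
    ultimately show ?thesis using True
      by (simp add: S_def delta_def tail_def phi_def norm_divide)
  qed
next
  case False
  have "n \<noteq> m" using False assms rough_1[of P] by auto
  moreover have "S P m n = 0" by (simp only: S_def if_not_P[OF False])
  ultimately show ?thesis by (simp add: delta_def)
qed



lemma l2_comb: "l2 a \<Longrightarrow> l2 b \<Longrightarrow> l2 (\<lambda>n. a n - c * b n)"
proof -
  assume "l2 a" "l2 b"
  hence "l2 (\<lambda>n. c * b n)" using nrm_scale by blast
  thus ?thesis using nrm_diff \<open>l2 a\<close> by blast
qed

lemma Cl_E:
  assumes L: "pp \<longlonglongrightarrow> L" and m: "m \<ge> 1"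
  shows "Cl (\<lambda>n. delta m n - of_real L * phi n)"
proof (rule Cl_lim)
  show "l2 (\<lambda>n. delta m n - of_real L * phi n)"
    using l2_comb l2_delta l2_phi by blast
  fix e :: real assume e: "e > 0"
  have lt: "l2 (tail phi P)" for P using l2_tail[OF l2_phi] .
  have "(\<lambda>P. real m * nrm (tail phi P) + \<bar>pp P - L\<bar> * nrm phi) \<longlonglongrightarrow> real m * 0 + \<bar>L - L\<bar> * nrm phi"
    by (intro tendsto_intros tail_lim l2_phi L)
  hence "eventually (\<lambda>P. real m * nrm (tail phi P) + \<bar>pp P - L\<bar> * nrm phi < e) sequentially"
    using e by (intro order_tendstoD(2)) auto
  then obtain P where P: "real m * nrm (tail phi P) + \<bar>pp P - L\<bar> * nrm phi < e"
    by (auto simp: eventually_sequentially)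
  have ClT: "Cl (T P m)" using Cl_T m .
  have lS: "l2 (S P m)"
  proof -
    have "l2 (\<lambda>n. of_nat m * phi n)" using nrm_scale[OF l2_phi] by blast
    moreover have "cmod (S P m n) \<le> cmod (of_nat m * phi n)" for n
      by (auto simp: S_def phi_def norm_divide norm_mult)
    ultimately show ?thesis using nrm_mono by blast
  qed
  have ldS: "l2 (\<lambda>n. delta m n - S P m n)" using nrm_diff[OF _ lS] l2_delta by blast
  have lmt: "l2 (\<lambda>n. of_nat m * tail phi P n)" using nrm_scale[OF lt] by blast
  have b1: "nrm (\<lambda>n. delta m n - S P m n) \<le> real m * nrm (tail phi P)"
  proof -
    have "nrm (\<lambda>n. delta m n - S P m n) \<le> nrm (\<lambda>n. of_nat m * tail phi P n)"
      using nrm_mono[OF lmt S_delta_bound[OF m]] by blast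
    also have "\<dots> = real m * nrm (tail phi P)" using nrm_scale[OF lt, of "of_nat m"] by simp
    finally show ?thesis .
  qed
  have lp: "l2 (\<lambda>n. of_real (pp P - L) * phi n)" using nrm_scale[OF l2_phi] by blast
  have b2: "nrm (\<lambda>n. of_real (pp P - L) * phi n) = \<bar>pp P - L\<bar> * nrm phi"
    using nrm_scale[OF l2_phi, of "of_real (pp P - L)"] by (simp only: norm_of_real)
  have eq: "(\<lambda>n. (delta m n - of_real L * phi n) - T P m n) =
      (\<lambda>n. (delta m n - S P m n) + of_real (pp P - L) * phi n)"
    by (auto simp: T_def algebra_simps)
  have "nrm (\<lambda>n. (delta m n - of_real L * phi n) - T P m n) \<le>
      nrm (\<lambda>n. delta m n - S P m n) + nrm (\<lambda>n. of_real (pp P - L) * phi n)"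
    unfolding eq using nrm_add[OF ldS lp] by blast
  also have "\<dots> < e" using b1 b2 P by linarith
  finally show "\<exists>b. Cl b \<and> nrm (\<lambda>n. delta m n - of_real L * phi n - b n) < e"
    using ClT by blast
qed

lemma Cl_delta: "Cl (delta m)"
proof -
  obtain L where L: "pp \<longlonglongrightarrow> L"
    using decseq_convergent[OF pp_dec, of 0] pp_nonneg by blast
  show ?thesis
  proof (cases "m = 0")
    case True thus ?thesis using Cl_delta0 by simp
  next
    case False
    hence m: "m \<ge> 1" by simp
    show ?thesis
    proof (cases "L = 0")
      case True
      have "Cl (\<lambda>n. delta m n - of_real L * phi n)" using Cl_E[OF L m] .
      thus ?thesis using True by simp
    next
      case Lnz: False
      have CE: "Cl (\<lambda>n. delta j n - of_real L * phi n)" if "j \<ge> 1" for j using Cl_E[OF L that] .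
      have A: "Cl (\<lambda>n. - (of_real L * phi n))"
      proof (rule Cl_lim)
        show "l2 (\<lambda>n. - (of_real L * phi n))" using nrm_scale[OF l2_phi, of "- of_real L"] by simp
        fix e :: real assume e: "e > 0"
        define M where "M = nat \<lceil>1 / e^2\<rceil> + 1"
        have M1: "M \<ge> 1" unfolding M_def by simp
        have Me: "real M > 1 / e^2" unfolding M_def by linarith
        define b where "b = (\<lambda>n. \<Sum>j\<in>{1..M}. (1 / of_nat M) * (delta j n - of_real L * phi n))"
        have Clb: "Cl b" unfolding b_def by (intro Cl_sum CE) auto
        have sd: "(\<Sum>j\<in>{1..M}. (1 / of_nat M) * delta j n) = (if n \<in> {1..M} then 1 / of_nat M else 0)" for n
        proof -
          have sdd: "(\<Sum>j\<in>{1..M}. delta j n) = (if n \<in> {1..M} then 1 else 0)"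
            unfolding delta_def by (rule sum.delta'[OF finite_atLeastAtMost])
          have "(\<Sum>j\<in>{1..M}. (1 / of_nat M) * delta j n) = (1 / of_nat M) * (\<Sum>j\<in>{1..M}. delta j n)"
            by (rule sum_distrib_left[symmetric])
          also have "\<dots> = (1 / of_nat M) * (if n \<in> {1..M} then 1 else 0)" by (simp only: sdd)
          also have "\<dots> = (if n \<in> {1..M} then 1 / of_nat M else 0)" by simp
          finally show ?thesis .
        qed
        have eq: "- (of_real L * phi n) - b n = - (if n \<in> {1..M} then 1 / of_nat M else 0)" for n
        proof -
          have "b n = (\<Sum>j\<in>{1..M}. (1 / of_nat M) * delta j n) - (\<Sum>j\<in>{1..M}. (1 / of_nat M :: complex)) * (of_real L * phi n)"
            unfolding b_def by (simp add: right_diff_distrib sum_subtractf sum_distrib_right)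
          also have "(\<Sum>j\<in>{1..M}. (1 / of_nat M :: complex)) = 1" using M1 by simp
          finally show ?thesis unfolding sd by simp
        qed
        have "l2 (\<lambda>n. - (of_real L * phi n) - b n) \<and>
            nrm (\<lambda>n. - (of_real L * phi n) - b n) = sqrt (\<Sum>n\<in>{1..M}. (cmod (- (of_real L * phi n) - b n))^2)"
          by (rule l2_finite) (auto simp: eq)
        also have "(\<Sum>n\<in>{1..M}. (cmod (- (of_real L * phi n) - b n))^2) = 1 / real M"
          using M1 by (simp add: eq norm_divide power2_eq_square)
        finally have nb: "nrm (\<lambda>n. - (of_real L * phi n) - b n) = sqrt (1 / real M)" by simp
        have "1 / real M < e^2" using Me e M1 by (simp add: field_simps)
        hence "sqrt (1 / real M) < sqrt (e^2)" by (rule real_sqrt_less_mono)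
        hence "nrm (\<lambda>n. - (of_real L * phi n) - b n) < e" using e nb by simp
        thus "\<exists>b. Cl b \<and> nrm (\<lambda>n. - (of_real L * phi n) - b n) < e" using Clb by blast
      qed
      have "Cl (\<lambda>n. (- 1 / of_real L) * (- (of_real L * phi n)))" using Cl_scale[OF A] .
      hence Cphi: "Cl phi" using Lnz by simp
      have "Cl (\<lambda>n. 1 * (delta m n - of_real L * phi n) + of_real L * phi n)"
        using Cl_E[OF L m] Cphi by (intro Cl_lin)
      thus ?thesis by simp
    qed
  qed
qed

lemma Cl_all: assumes "l2 a" shows "Cl a"
proof (rule Cl_lim[OF assms])
  fix e :: real assume e: "e > 0"
  have "eventually (\<lambda>M. nrm (tail a M) < e) sequentially"
    using tail_lim[OF assms] e by (intro order_tendstoD(2)) auto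
  then obtain M where M: "nrm (tail a M) < e" by (auto simp: eventually_sequentially)
  define b where "b = (\<lambda>n. \<Sum>j<M. a j * delta j n)"
  have Clb: "Cl b" unfolding b_def by (intro Cl_sum Cl_delta) auto
  have "b n = (if n < M then a n else 0)" for n
    unfolding b_def delta_def by (simp add: if_distrib[of "\<lambda>x. a _ * x"] sum.delta' cong: if_cong)
  hence "(\<lambda>n. a n - b n) = tail a M" by (auto simp: tail_def fun_eq_iff)
  thus "\<exists>b. Cl b \<and> nrm (\<lambda>n. a n - b n) < e" using Clb M by auto
qed

lemma main_seq:
  assumes "l2 a" "e > 0"
  shows "\<exists>K c. finite K \<and> K \<subseteq> {2..} \<and> nrm (\<lambda>n. a n - (\<Sum>k\<in>K. c k * G k n)) < e"
proof -
  obtain v where v: "v \<in> V" "nrm (\<lambda>n. a n - v n) < e"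
    using Cl_all[OF assms(1)] assms(2) unfolding Cl_def by blast
  then obtain K c where "finite K" "K \<subseteq> {2..}" "v = (\<lambda>n. \<Sum>k\<in>K. c k * G k n)"
    unfolding V_def by blast
  thus ?thesis using v(2) by blast
qed



definition fk :: "nat \<Rightarrow> complex \<Rightarrow> complex" where
  "fk k = (\<lambda>z. h k z - shift (h k) z)"

lemma phi_series: "norm u < 1 \<Longrightarrow> (\<lambda>n. phi n * u^n) sums (- Ln (1 - u))"
proof -
  assume u: "norm u < 1"
  have "(\<lambda>n. - ((-(-u))^n) / of_nat n) sums ln (1 + (-u))" using u by (intro Ln_series') simp
  hence "(\<lambda>n. - (- (u^n) / of_nat n)) sums (- ln (1 - u))" using sums_minus by fastforce
  moreover have "(\<lambda>n. - (- (u^n) / of_nat n)) = (\<lambda>n. phi n * u^n)"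
    by (auto simp: phi_def fun_eq_iff)
  ultimately show ?thesis by simp
qed

lemma psi_series:
  assumes "norm u < 1" "k \<ge> 1"
  shows "(\<lambda>n. psi k n * u^n) sums (- Ln (1 - u^k))"
proof -
  have sm: "strict_mono (\<lambda>m. k * m)" using assms by (auto simp: strict_mono_def)
  have nu: "norm (u^k) < 1" using assms by (simp add: norm_power power_less_one_iff)
  have "(\<lambda>m. phi m * (u^k)^m) sums (- Ln (1 - u^k))" by (rule phi_series[OF nu])
  moreover have "(\<lambda>m. psi k (k * m) * u^(k * m)) = (\<lambda>m. phi m * (u^k)^m)"
    using assms by (auto simp: psi_def phi_def fun_eq_iff power_mult)
  ultimately have "(\<lambda>m. psi k (k * m) * u^(k * m)) sums (- Ln (1 - u^k))" by simp
  thus ?thesis by (subst (asm) sums_mono_reindex[OF sm]) (auto simp: psi_def)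
qed

lemma fk_eq:
  assumes "norm u < 1"
  shows "fk k u = Ln (1 - u^k) - Ln (1 - u) - of_real (ln (real k))"
proof -
  have ne: "1 - u \<noteq> 0" using assms by auto
  define X where "X = Ln (1 - u^k) - Ln (1 - u) - of_real (ln (real k))"
  have "fk k u = X / (1 - u) - u * (X / (1 - u))" unfolding fk_def h_def shift_def X_def by simp
  also have "\<dots> = (1 - u) * (X / (1 - u))" by (simp only: left_diff_distrib mult_1_left)
  also have "\<dots> = X" using ne by simp
  finally show ?thesis unfolding X_def .
qed

lemma fk_expansion:
  assumes "k \<ge> 1"
  shows "fk k has_fps_expansion Abs_fps (G k)"
proof (rule has_fps_expansionI)
  have ev: "eventually (\<lambda>u. u \<in> ball 0 1) (nhds (0::complex))"
    by (intro eventually_nhds_in_open) auto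
  show "eventually (\<lambda>u. (\<lambda>n. fps_nth (Abs_fps (G k)) n * u ^ n) sums fk k u) (nhds 0)"
  proof (rule eventually_mono[OF ev])
    fix u :: complex assume "u \<in> ball 0 1"
    hence u: "norm u < 1" by simp
    have s3: "(\<lambda>n. (if n = 0 then of_real (ln (real k)) else 0) * u^n) sums of_real (ln (real k))"
    proof -
      have "(\<lambda>n. (if n = 0 then of_real (ln (real k)) else 0) * u^n) =
            (\<lambda>n. if n = 0 then (\<lambda>_. of_real (ln (real k)) :: complex) n else 0)"
        by (auto simp: fun_eq_iff)
      thus ?thesis using sums_single[of 0 "\<lambda>_. of_real (ln (real k)) :: complex"] by simp
    qed
    have "(\<lambda>n. phi n * u^n - psi k n * u^n - (if n = 0 then of_real (ln (real k)) else 0) * u^n) sums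
          (- Ln (1 - u) - (- Ln (1 - u^k)) - of_real (ln (real k)))"
      by (intro sums_diff phi_series psi_series u assms s3)
    moreover have "(\<lambda>n. phi n * u^n - psi k n * u^n - (if n = 0 then of_real (ln (real k)) else 0) * u^n)
        = (\<lambda>n. fps_nth (Abs_fps (G k)) n * u ^ n)"
      by (simp add: G_def fun_eq_iff algebra_simps)
    moreover have "- Ln (1 - u) - (- Ln (1 - u^k)) - of_real (ln (real k)) = fk k u"
      using fk_eq[OF u] by simp
    ultimately show "(\<lambda>n. fps_nth (Abs_fps (G k)) n * u ^ n) sums fk k u" by simp
  qed
qed

lemma lin_span_mem:
  assumes "finite K" "K \<subseteq> {2..}"
  shows "(\<lambda>z. \<Sum>k\<in>K. c k * fk k z) \<in> lin_span {(\<lambda>z. h k z - shift (h k) z) | k. k \<ge> 2}"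
proof -
  define c' where "c' u = (\<Sum>k\<in>{x\<in>K. fk x = u}. c k)" for u
  have sub: "fk ` K \<subseteq> {(\<lambda>z. h k z - shift (h k) z) | k. k \<ge> 2}"
    using assms(2) unfolding fk_def by auto
  have "(\<Sum>u\<in>fk ` K. c' u * u z) = (\<Sum>k\<in>K. c k * fk k z)" for z
  proof -
    have "(\<Sum>u\<in>fk ` K. c' u * u z) = (\<Sum>u\<in>fk ` K. \<Sum>k\<in>{x\<in>K. fk x = u}. c k * fk k z)"
      unfolding c'_def sum_distrib_right by (intro sum.cong refl) auto
    also have "\<dots> = (\<Sum>k\<in>K. c k * fk k z)"
      by (rule sum.image_gen[symmetric]) (rule assms(1))
    finally show ?thesis .
  qed
  hence "(\<lambda>z. \<Sum>k\<in>K. c k * fk k z) = (\<lambda>z. \<Sum>u\<in>fk ` K. c' u * u z)" by simp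
  thus ?thesis unfolding lin_span_def using sub assms(1) by blast
qed



theorem mainTheorem9:
  shows "\<forall>f\<in>hardy2. \<forall>e>0. \<exists>g\<in>lin_span {(\<lambda>z. h k z - shift (h k) z) | k. k \<ge> 2}.
           hardy2_norm (\<lambda>z. f z - g z) < e"
proof (intro ballI allI impI)
  fix f :: "complex \<Rightarrow> complex" and e :: real
  assume f: "f \<in> hardy2" and e: "e > 0"
  define a where "a = taylor_coeff f"
  have hol: "f holomorphic_on ball 0 1" and la: "l2 a"
    using f unfolding hardy2_def l2_def a_def by auto
  obtain K c where K: "finite K" "K \<subseteq> {2..}"
    and nK: "nrm (\<lambda>n. a n - (\<Sum>k\<in>K. c k * G k n)) < e"
    using main_seq[OF la e] by blast
  define g where "g = (\<lambda>z. \<Sum>k\<in>K. c k * fk k z)"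
  have gmem: "g \<in> lin_span {(\<lambda>z. h k z - shift (h k) z) | k. k \<ge> 2}"
    unfolding g_def by (rule lin_span_mem[OF K])
  have fe: "f has_fps_expansion fps_expansion f 0"
    using hol by (intro has_fps_expansion_fps_expansion) auto
  have ge: "g has_fps_expansion (\<Sum>k\<in>K. fps_const (c k) * Abs_fps (G k))"
    unfolding g_def
  proof (intro has_fps_expansion_sum has_fps_expansion_cmult_left fk_expansion)
    fix k assume "k \<in> K" thus "k \<ge> 1" using K(2) by auto
  qed
  have de: "(\<lambda>z. f z - g z) has_fps_expansion (fps_expansion f 0 - (\<Sum>k\<in>K. fps_const (c k) * Abs_fps (G k)))"
    using fe ge by (rule has_fps_expansion_diff)
  have tc: "taylor_coeff (\<lambda>z. f z - g z) n = a n - (\<Sum>k\<in>K. c k * G k n)" for n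
  proof -
    have "taylor_coeff (\<lambda>z. f z - g z) n = fps_nth (fps_expansion f 0 - (\<Sum>k\<in>K. fps_const (c k) * Abs_fps (G k))) n"
      unfolding taylor_coeff_def using fps_nth_fps_expansion[OF de, of n] by simp
    also have "\<dots> = fps_nth (fps_expansion f 0) n - (\<Sum>k\<in>K. c k * G k n)"
      by (simp add: fps_sum_nth)
    also have "fps_nth (fps_expansion f 0) n = a n"
      unfolding a_def taylor_coeff_def using fps_nth_fps_expansion[OF fe, of n] by simp
    finally show ?thesis .
  qed
  have "hardy2_norm (\<lambda>z. f z - g z) = nrm (\<lambda>n. a n - (\<Sum>k\<in>K. c k * G k n))"
    unfolding hardy2_norm_def nrm_def tc ..
  thus "\<exists>g\<in>lin_span {(\<lambda>z. h k z - shift (h k) z) | k. k \<ge> 2}. hardy2_norm (\<lambda>z. f z - g z) < e"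
    using gmem nK by (intro bexI[where x=g]) simp_all
qed

end
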